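(* Let $\alpha>0$ and let $f$ be defined by $x^\alpha+X^\alpha+f(x,X)^\alpha=1$, i.e. $f(x,X)=(1-x^\alpha-X^\alpha)^{1/\alpha}$ (for $\alpha=1$, $f(x,X)=1-x-X$), on a domain where the following maps are defined. Let $$S(x,X;y,Y)=(u,U;v,V)=\Big(\frac{x}{f(v,V)},\;X\frac{f(y,Y)}{f(v,V)};\;Xy,\;XY\Big),$$ let $\phi(x,X)=\big(f(x,X)/x,\;X/x\big)$, whose inverse is $\phi^{-1}(x,X)=\big((1+x^\alpha+X^\alpha)^{-1/\alpha},\;X(1+x^\alpha+X^\alpha)^{-1/\alpha}\big)$, and let $$S^{xY}(x,X;y,Y)=\Big(x,\;\frac{Xy}{(1+y^\alpha+Y^\alpha)^{1/\alpha}};\;\frac{\big((1+x^\alpha)(1+y^\alpha+Y^\alpha)+X^\alpha y^\alpha\big)^{1/\alpha}}{X},\;Y\Big).$$ Then $(\phi\times\phi)\circ S\circ(\phi^{-1}\times\phi^{-1})=S^{xY}$; i.e. $S$ is $(\mathrm{M\ddot ob})^2$ equivalent to the parametric map $S^{xY}$, which leaves the first and fourth components invariant.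
   Context: Two maps $S,\widehat S:\mathcal X^2\times\mathcal X^2\to\mathcal X^2\times\mathcal X^2$ are $(\mathrm{M\ddot ob})^2$ equivalent if there exists a birational map $\psi:\mathcal X^2\to\mathcal X^2$ with $S\circ(\psi\times\psi)=(\psi\times\psi)\circ\widehat S$ (here $\psi=\phi^{-1}$). *)

theory Defs
  imports Complex_Main
begin

definition fa :: "real \<Rightarrow> real \<Rightarrow> real \<Rightarrow> real" where
  "fa a x X = (1 - x powr a - X powr a) powr (1 / a)"

definition S_map :: "real \<Rightarrow> (real \<times> real) \<times> (real \<times> real) \<Rightarrow> (real \<times> real) \<times> (real \<times> real)" where
  "S_map a p = (let ((x, X), (y, Y)) = p; v = X * y; V = X * Y in
     ((x / fa a v V, X * fa a y Y / fa a v V), (v, V)))"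

definition phi :: "real \<Rightarrow> real \<times> real \<Rightarrow> real \<times> real" where
  "phi a p = (let (x, X) = p in (fa a x X / x, X / x))"

definition phi_inv :: "real \<Rightarrow> real \<times> real \<Rightarrow> real \<times> real" where
  "phi_inv a p = (let (x, X) = p in
     ((1 + x powr a + X powr a) powr (- 1 / a), X * (1 + x powr a + X powr a) powr (- 1 / a)))"

definition S_xY :: "real \<Rightarrow> (real \<times> real) \<times> (real \<times> real) \<Rightarrow> (real \<times> real) \<times> (real \<times> real)" where
  "S_xY a p = (let ((x, X), (y, Y)) = p in
     ((x, X * y / (1 + y powr a + Y powr a) powr (1 / a)),
      (((1 + x powr a) * (1 + y powr a + Y powr a) + X powr a * y powr a) powr (1 / a) / X, Y)))"

definition prod_map2 :: "('a \<Rightarrow> 'b) \<Rightarrow> 'a \<times> 'a \<Rightarrow> 'b \<times> 'b" where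
  "prod_map2 g p = (g (fst p), g (snd p))"

end

theory Submission
  imports Defs
begin

lemma root_eq:
  fixes a r c :: real
  assumes "0 < a" "0 < c" "r = c powr a"
  shows "r powr (1/a) = c"
  using assms by (simp add: powr_powr)

theorem mainTheorem9:
  fixes a x X y Y :: real
  assumes "a > 0" and "x > 0" and "X > 0" and "y > 0" and "Y > 0"
  shows "(prod_map2 (phi a) \<circ> S_map a \<circ> prod_map2 (phi_inv a)) ((x, X), (y, Y))
           = S_xY a ((x, X), (y, Y))"
proof -
  have a0: "a \<noteq> 0" using assms by simp
  define D1 where "D1 = 1 + x powr a + X powr a"
  define D2 where "D2 = 1 + y powr a + Y powr a"
  have D1p: "D1 > 0" unfolding D1_def by (simp add: add_pos_nonneg)
  have D2p: "D2 > 0" unfolding D2_def by (simp add: add_pos_nonneg)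
  define p where "p = D1 powr (-1/a)"
  define q where "q = D2 powr (-1/a)"
  have pp: "p > 0" "p powr a = 1 / D1" using D1p a0 by (auto simp: p_def powr_powr powr_divide)
  have qp: "q > 0" "q powr a = 1 / D2" using D2p a0 by (auto simp: q_def powr_powr powr_divide)
  have qinv: "q = 1 / D2 powr (1/a)" unfolding q_def
    by (metis minus_divide_left powr_minus_divide)
  define G0 where "G0 = (1 + x powr a) * D2 + X powr a * y powr a"
  have G0p: "G0 > 0" unfolding G0_def using D2p by (simp add: add_pos_nonneg)
  define G where "G = G0 powr (1/a)"
  have Gp: "G > 0" "G powr a = G0" using G0p a0 by (auto simp: G_def powr_powr)
  have fy: "fa a q (Y*q) = y*q"
    unfolding fa_def
  proof (rule root_eq)
    show "0 < a" "0 < y*q" using assms qp by auto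
    show "1 - q powr a - (Y * q) powr a = (y * q) powr a"
      using qp assms D2p by (simp add: powr_mult D2_def field_simps)
  qed
  have fF: "fa a (X*p*q) (X*p*(Y*q)) = G*p*q"
    unfolding fa_def
  proof (rule root_eq)
    show "0 < a" "0 < G*p*q" using assms qp pp Gp by auto
    show "1 - (X*p*q) powr a - (X*p*(Y*q)) powr a = (G*p*q) powr a"
      using qp pp Gp assms D2p D1p
      apply (simp add: powr_mult pp(2) qp(2) Gp(2))
      using D1p D2p apply (simp add: field_simps)
      apply (simp add: D2_def D1_def G0_def algebra_simps)
      done
  qed
  have fu: "fa a (p / (G*p*q)) (X*p*(y*q) / (G*p*q)) = x / (G*q)"
    unfolding fa_def
  proof (rule root_eq)
    show "0 < a" "0 < x/(G*q)" using assms qp pp Gp by auto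
    have e1: "p / (G*p*q) = 1/(G*q)" "X*p*(y*q) / (G*p*q) = X*y/G"
      using pp(1) qp(1) Gp(1) by (simp_all add: field_simps)
    show "1 - (p / (G*p*q)) powr a - (X*p*(y*q) / (G*p*q)) powr a = (x / (G*q)) powr a"
      unfolding e1
      using qp pp Gp assms D2p D1p
      apply (simp add: powr_mult powr_divide pp(2) qp(2) Gp(2))
      using G0p D2p apply (simp add: field_simps)
      apply (simp add: D2_def G0_def algebra_simps)
      done
  qed
  have pi1: "phi_inv a (x, X) = (p, X*p)" by (simp add: phi_inv_def Let_def p_def D1_def)
  have pi2: "phi_inv a (y, Y) = (q, Y*q)" by (simp add: phi_inv_def Let_def q_def D2_def)
  have S: "S_map a ((p, X*p), (q, Y*q)) = ((p / (G*p*q), X*p*(y*q) / (G*p*q)), (X*p*q, X*p*(Y*q)))"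
    unfolding S_map_def Let_def by (simp only: prod.case fy fF)
  have L: "(prod_map2 (phi a) \<circ> S_map a \<circ> prod_map2 (phi_inv a)) ((x, X), (y, Y))
      = ((x / (G*q) / (p / (G*p*q)), X*p*(y*q) / (G*p*q) / (p / (G*p*q))),
         (G*p*q / (X*p*q), X*p*(Y*q) / (X*p*q)))"
    by (simp only: comp_def prod_map2_def fst_conv snd_conv pi1 pi2 S phi_def Let_def prod.case fu fF)
  have R: "S_xY a ((x, X), (y, Y)) = ((x, X*y / D2 powr (1/a)), (G/X, Y))"
    by (simp add: S_xY_def D2_def G_def G0_def)
  show ?thesis unfolding L R
    using pp(1) qp(1) Gp(1) assms D2p
    by (simp add: qinv field_simps)
qed

end
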